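(* Let $f\in C^\infty(\mathbb{R})$ be real-valued, let $a\in\mathbb{R}$ and $g=(aI+\frac{d}{dx})f$, i.e. $g=af+f'$. Then $D^-(N_g,m_g)\ge D^-(N_f,m_f)$. Moreover, for $N\ge2$ and real-valued $f\in C^{N-1}(\mathbb{R})$, the same inequality holds when $m_f$ is replaced by the multiplicity function of the zeros of $f$ of height at most $N$ and $m_g$ by the multiplicity function of the zeros of $g$ of height at most $N-1$.
   Context: For a function $h$, $N_h$ is its set of real zeros and $m_h(x)=\sup\{m:h^{(j)}(x)=0\text{ for }0\le j<m\}$ its multiplicity function. For $h\in C^{K-1}(\mathbb{R})$, the multiplicity function of zeros of height at most $K$ is $x\mapsto\max\{m\le K:h^{(j)}(x)=0\text{ for }0\le j<m\}$. $D^-(N,m)=\liminf_{r\to\infty}\inf_{x\in\mathbb{R}}\frac{1}{2r}\sum_{\lambda\in N\cap[x-r,x+r]}m(\lambda)$. *)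

theory Defs
  imports "HOL-Analysis.Analysis"
begin

abbreviation higher_deriv_real :: "nat \<Rightarrow> (real \<Rightarrow> real) \<Rightarrow> real \<Rightarrow> real" where
  "higher_deriv_real k h \<equiv> (deriv ^^ k) h"

definition Ck :: "nat \<Rightarrow> (real \<Rightarrow> real) \<Rightarrow> bool" where
  "Ck k h \<longleftrightarrow> (\<forall>j<k. \<forall>x. higher_deriv_real j h differentiable (at x))
              \<and> continuous_on UNIV (higher_deriv_real k h)"

definition Cinf :: "(real \<Rightarrow> real) \<Rightarrow> bool" where
  "Cinf h \<longleftrightarrow> (\<forall>k. Ck k h)"

definition zero_set :: "(real \<Rightarrow> real) \<Rightarrow> real set" where
  "zero_set h = {x. h x = 0}"

definition mult_fun :: "(real \<Rightarrow> real) \<Rightarrow> real \<Rightarrow> enat" where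
  "mult_fun h x = Sup {m::enat. \<forall>j::nat. enat j < m \<longrightarrow> higher_deriv_real j h x = 0}"

definition mult_fun_le :: "nat \<Rightarrow> (real \<Rightarrow> real) \<Rightarrow> real \<Rightarrow> enat" where
  "mult_fun_le K h x = enat (Max {m::nat. m \<le> K \<and> (\<forall>j<m. higher_deriv_real j h x = 0)})"

definition lower_density :: "real set \<Rightarrow> (real \<Rightarrow> enat) \<Rightarrow> ennreal" where
  "lower_density Z m = Liminf at_top (\<lambda>r::real. INF x::real.
      ennreal (1 / (2 * r)) * infsum (\<lambda>l. ennreal_of_enat (m l)) (Z \<inter> {x - r .. x + r}))"

end

theory Submission
  imports Defs
begin


lemma hd_formula:
  fixes f :: "real \<Rightarrow> real"
  assumes d: "\<And>j x. j < K \<Longrightarrow> (deriv^^j) f differentiable (at x)"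
  shows "j < K \<Longrightarrow> (deriv^^j) (\<lambda>x. a * f x + deriv f x) = (\<lambda>x. a * (deriv^^j) f x + (deriv^^(Suc j)) f x)"
proof (induction j)
  case 0
  then show ?case by simp
next
  case (Suc j)
  then have IH: "(deriv^^j) (\<lambda>x. a * f x + deriv f x) = (\<lambda>x. a * (deriv^^j) f x + (deriv^^(Suc j)) f x)" by simp
  have *: "deriv (\<lambda>x. a * (deriv^^j) f x + (deriv^^(Suc j)) f x) x = a * (deriv^^(Suc j)) f x + (deriv^^(Suc (Suc j))) f x" for x
  proof -
    have 1: "DERIV ((deriv^^j) f) x :> (deriv^^(Suc j)) f x"
      using d[of j x] Suc.prems DERIV_deriv_iff_real_differentiable by force
    have 2: "DERIV ((deriv^^(Suc j)) f) x :> (deriv^^(Suc (Suc j))) f x"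
    proof -
      have "(deriv^^(Suc j)) f differentiable (at x)" using d[of "Suc j" x] Suc.prems by blast
      then have "DERIV ((deriv^^(Suc j)) f) x :> deriv ((deriv^^(Suc j)) f) x"
        using DERIV_deriv_iff_real_differentiable by blast
      then show ?thesis by (metis comp_apply funpow.simps(2))
    qed
    show ?thesis
      by (intro DERIV_imp_deriv DERIV_add DERIV_cmult 1 2)
  qed
  show ?case
    apply (subst funpow.simps(2)) apply (subst comp_apply) apply (subst IH) apply (rule ext) apply (rule *) done
qed

lemma rolle_g:
  fixes f :: "real \<Rightarrow> real"
  assumes d: "\<And>x. f differentiable (at x)" and "p < q" "f p = 0" "f q = 0"
  shows "\<exists>z. p < z \<and> z < q \<and> a * f z + deriv f z = 0"
proof -
  define h where "h = (\<lambda>x. exp (a * x) * f x)"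
  have D: "DERIV h x :> exp (a * x) * (a * f x + deriv f x)" for x
  proof -
    have "DERIV f x :> deriv f x" using d DERIV_deriv_iff_real_differentiable by blast
    then show ?thesis unfolding h_def
      by (auto intro!: derivative_eq_intros simp: algebra_simps)
  qed
  have "continuous_on {p..q} h"
    using D by (meson DERIV_isCont continuous_at_imp_continuous_on)
  moreover have "h p = h q" using assms by (simp add: h_def)
  moreover have D': "(h has_derivative (*) (exp (a * x) * (a * f x + deriv f x))) (at x)" for x
    using D[of x] unfolding has_field_derivative_def .
  ultimately obtain z where z: "p < z" "z < q" "(*) (exp (a * z) * (a * f z + deriv f z)) = (\<lambda>v. 0)"
    using Rolle_deriv[of p q h "\<lambda>x. (*) (exp (a * x) * (a * f x + deriv f x))"] \<open>p < q\<close> by blast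
  then have "exp (a * z) * (a * f z + deriv f z) = 0" by (metis mult_1_right fun_cong)
  then show ?thesis using z by auto
qed

lemma rolle_points:
  fixes f :: "real \<Rightarrow> real"
  assumes d: "\<And>x. f differentiable (at x)"
  shows "finite F \<Longrightarrow> (\<forall>z\<in>F. f z = 0) \<Longrightarrow> \<exists>X. finite X \<and> card F \<le> card X + 1 \<and>
     (\<forall>y\<in>X. a * f y + deriv f y = 0 \<and> y \<notin> F \<and> (\<exists>z1\<in>F. \<exists>z2\<in>F. z1 < y \<and> y < z2))"
proof (induction F rule: finite_linorder_max_induct)
  case empty
  then show ?case by (intro exI[of _ "{}"]) auto
next
  case (insert b A)
  show ?case
  proof (cases "A = {}")
    case True
    then show ?thesis by (intro exI[of _ "{}"]) auto
  next
    case False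
    from insert obtain X where X: "finite X" "card A \<le> card X + 1"
      "\<forall>y\<in>X. a * f y + deriv f y = 0 \<and> y \<notin> A \<and> (\<exists>z1\<in>A. \<exists>z2\<in>A. z1 < y \<and> y < z2)"
      by auto
    define m where "m = Max A"
    have mA: "m \<in> A" using False insert.hyps(1) m_def by simp
    have mge: "\<forall>z\<in>A. z \<le> m" using insert.hyps(1) m_def by simp
    have "m < b" using mA insert.hyps by auto
    moreover have "f m = 0" "f b = 0" using insert.prems mA by auto
    ultimately obtain y where y: "m < y" "y < b" "a * f y + deriv f y = 0"
      using rolle_g[OF d] by blast
    have yX: "y \<notin> X" using X(3) mge y(1) by fastforce
    have bA: "b \<notin> A" using insert.hyps by auto
    show ?thesis
    proof (intro exI[of _ "insert y X"] conjI)
      show "finite (insert y X)" using X by simp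
      show "card (insert b A) \<le> card (insert y X) + 1"
        using X yX bA insert.hyps(1) by simp
      have "a * f w + deriv f w = 0 \<and> w \<notin> insert b A \<and> (\<exists>z1\<in>insert b A. \<exists>z2\<in>insert b A. z1 < w \<and> w < z2)"
        if "w \<in> insert y X" for w
        using that
      proof
        assume "w = y" then show ?thesis using y mA mge by fastforce
      next
        assume "w \<in> X" then show ?thesis using X(3) insert.hyps(2) by fastforce
      qed
      then show "\<forall>w\<in>insert y X. a * f w + deriv f w = 0 \<and> w \<notin> insert b A \<and> (\<exists>z1\<in>insert b A. \<exists>z2\<in>insert b A. z1 < w \<and> w < z2)" by blast
    qed
  qed
qed


lemma interval_bound:
  fixes f g :: "real \<Rightarrow> real" and mf mg :: "real \<Rightarrow> enat"
  assumes d: "\<And>x. f differentiable (at x)"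
   and gdef: "g = (\<lambda>x. a * f x + deriv f x)"
   and h1: "\<And>z. f z = 0 \<Longrightarrow> mf z \<le> mg z + 1"
   and h2: "\<And>z. g z = 0 \<Longrightarrow> 1 \<le> mg z"
   and h3: "\<And>z. g z \<noteq> 0 \<Longrightarrow> mg z = 0"
  shows "infsum (\<lambda>l. ennreal_of_enat (mf l)) (zero_set f \<inter> {u..v})
     \<le> infsum (\<lambda>l. ennreal_of_enat (mg l)) (zero_set g \<inter> {u..v}) + 1"
proof (rule infsum_le_finite_sums)
  show "(\<lambda>l. ennreal_of_enat (mf l)) summable_on zero_set f \<inter> {u..v}" by simp
  fix F assume F: "finite F" "F \<subseteq> zero_set f \<inter> {u..v}"
  then have Fz: "\<forall>z\<in>F. f z = 0" by (auto simp: zero_set_def)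
  obtain X where X: "finite X" "card F \<le> card X + 1"
     "\<forall>y\<in>X. a * f y + deriv f y = 0 \<and> y \<notin> F \<and> (\<exists>z1\<in>F. \<exists>z2\<in>F. z1 < y \<and> y < z2)"
    using rolle_points[OF d F(1) Fz, of a] by blast
  have XI: "X \<subseteq> {u..v}"
  proof
    fix y assume "y \<in> X"
    then obtain z1 z2 where "z1 \<in> F" "z2 \<in> F" "z1 < y" "y < z2" using X(3) by blast
    then show "y \<in> {u..v}" using F(2) by fastforce
  qed
  have Xg: "\<forall>y\<in>X. g y = 0" using X(3) gdef by simp
  have disj: "F \<inter> X = {}" using X(3) by blast
  let ?mf = "\<lambda>l. ennreal_of_enat (mf l)" and ?mg = "\<lambda>l. ennreal_of_enat (mg l)"
  have "sum ?mf F \<le> sum (\<lambda>z. ?mg z + 1) F"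
    apply (rule sum_mono) using h1 Fz
    by (metis ennreal_of_enat_1 ennreal_of_enat_le_iff ennreal_of_enat_plus)
  also have "\<dots> = sum ?mg F + of_nat (card F)" by (simp add: sum.distrib)
  also have "\<dots> \<le> sum ?mg F + (of_nat (card X) + 1)"
    using X(2) by (intro add_left_mono) (metis of_nat_Suc of_nat_le_iff add.commute plus_1_eq_Suc)
  also have "of_nat (card X) \<le> sum ?mg X"
  proof -
    have "of_nat (card X) = sum (\<lambda>_. 1::ennreal) X" by simp
    also have "\<dots> \<le> sum ?mg X" apply (rule sum_mono) using h2 Xg
      by (metis ennreal_of_enat_1 ennreal_of_enat_le_iff)
    finally show ?thesis .
  qed
  then have "sum ?mg F + (of_nat (card X) + 1) \<le> sum ?mg F + (sum ?mg X + 1)"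
    by (intro add_left_mono add_right_mono)
  also have "\<dots> = sum ?mg (F \<union> X) + 1"
    using F(1) X(1) disj by (simp add: sum.union_disjoint add.assoc)
  also have "sum ?mg (F \<union> X) = sum ?mg ((F \<union> X) \<inter> zero_set g)"
    using F(1) X(1) h3 by (intro sum.mono_neutral_right) (auto simp: zero_set_def, (metis ennreal_of_enat_0)+)
  also have "\<dots> \<le> infsum ?mg (zero_set g \<inter> {u..v})"
    unfolding nonneg_infsum_complete[OF zero_le]
    apply (rule SUP_upper)
    using F X XI by auto
  finally show "sum ?mf F \<le> infsum ?mg (zero_set g \<inter> {u..v}) + 1" by simp
qed


lemma INF_ennreal_add_const_gen:
  fixes f :: "'b \<Rightarrow> ennreal"
  shows "(INF i. f i + c) = (INF i. f i) + c"
  using continuous_at_Inf_mono[of "\<lambda>x. x + c" "f`UNIV"]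
  using continuous_add[of "at_right (Inf (range f))", of "\<lambda>x. x" "\<lambda>x. c"]
  by (auto simp: mono_def image_comp)

lemma density_mono:
  fixes Zf Zg :: "real set" and mf mg :: "real \<Rightarrow> enat"
  assumes H: "\<And>x r. r > 0 \<Longrightarrow> infsum (\<lambda>l. ennreal_of_enat (mf l)) (Zf \<inter> {x - r .. x + r})
     \<le> infsum (\<lambda>l. ennreal_of_enat (mg l)) (Zg \<inter> {x - r .. x + r}) + 1"
  shows "lower_density Zf mf \<le> lower_density Zg mg"
proof -
  define Sf where "Sf = (\<lambda>x r. infsum (\<lambda>l. ennreal_of_enat (mf l)) (Zf \<inter> {x - r .. x + r}))"
  define Sg where "Sg = (\<lambda>x r. infsum (\<lambda>l. ennreal_of_enat (mg l)) (Zg \<inter> {x - r .. x + r}))"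
  define Pf where "Pf = (\<lambda>r::real. INF x::real. ennreal (1 / (2 * r)) * Sf x r)"
  define Pg where "Pg = (\<lambda>r::real. INF x::real. ennreal (1 / (2 * r)) * Sg x r)"
  have LD: "lower_density Zf mf = Liminf at_top Pf" "lower_density Zg mg = Liminf at_top Pg"
    unfolding lower_density_def Pf_def Pg_def Sf_def Sg_def by simp_all
  show ?thesis unfolding LD
  proof (rule ennreal_le_epsilon)
    fix e :: real assume e: "0 < e"
    have ev: "eventually (\<lambda>r. Pf r \<le> Pg r + ennreal e) at_top"
      unfolding eventually_at_top_linorder
    proof (intro exI[of _ "1 / e"] allI impI)
      fix r :: real assume r: "1 / e \<le> r"
      then have rpos: "r > 0" using e by (meson less_le_trans zero_less_divide_1_iff)
      have ce: "1 / (2 * r) \<le> e"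
        using r e rpos by (simp add: field_simps)
      let ?c = "ennreal (1 / (2 * r))"
      have "Pf r \<le> ?c * Sg x r + ennreal e" for x
      proof -
        have "Pf r \<le> ?c * Sf x r" unfolding Pf_def by (rule INF_lower) simp
        also have "\<dots> \<le> ?c * (Sg x r + 1)"
          using H[OF rpos, of x] unfolding Sf_def Sg_def by (intro mult_left_mono) auto
        also have "\<dots> = ?c * Sg x r + ?c" by (simp add: distrib_left)
        also have "\<dots> \<le> ?c * Sg x r + ennreal e"
          using ce by (intro add_left_mono ennreal_leI)
        finally show ?thesis .
      qed
      then have "Pf r \<le> (INF x. ?c * Sg x r + ennreal e)" by (rule INF_greatest)
      also have "\<dots> = Pg r + ennreal e" unfolding Pg_def by (rule INF_ennreal_add_const_gen)
      finally show "Pf r \<le> Pg r + ennreal e" .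
    qed
    have "Liminf at_top Pf \<le> Liminf at_top (\<lambda>r. Pg r + ennreal e)"
      by (rule Liminf_mono[OF ev])
    also have "\<dots> = Liminf at_top Pg + ennreal e"
      by (rule Liminf_add_const) simp
    finally show "Liminf at_top Pf \<le> Liminf at_top Pg + ennreal e" .
  qed
qed


lemma Cinf_diff:
  assumes "Cinf f" shows "(deriv^^j) f differentiable (at x)"
  using assms unfolding Cinf_def Ck_def by (meson lessI)

lemma Cinf_formula:
  fixes f :: "real \<Rightarrow> real"
  assumes "Cinf f"
  shows "(deriv^^j) (\<lambda>x. a * f x + deriv f x) z = a * (deriv^^j) f z + (deriv^^(Suc j)) f z"
  using hd_formula[of "Suc j" f j a] Cinf_diff[OF assms] by simp

lemma mult_fun_h1:
  fixes f :: "real \<Rightarrow> real"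
  assumes "Cinf f"
  shows "mult_fun f z \<le> mult_fun (\<lambda>x. a * f x + deriv f x) z + 1"
proof -
  let ?g = "\<lambda>x. a * f x + deriv f x"
  let ?Sg = "{m::enat. \<forall>j::nat. enat j < m \<longrightarrow> (deriv^^j) ?g z = 0}"
  show ?thesis unfolding mult_fun_def
  proof (rule Sup_least)
    fix m assume m: "m \<in> {m::enat. \<forall>j::nat. enat j < m \<longrightarrow> (deriv^^j) f z = 0}"
    show "m \<le> Sup ?Sg + 1"
    proof (cases m)
      case (enat n)
      show ?thesis
      proof (cases n)
        case 0 then show ?thesis using enat by (simp add: zero_enat_def[symmetric])
      next
        case (Suc k)
        have "enat k \<in> ?Sg"
        proof (safe)
          fix j assume "enat j < enat k"
          then have "j < k" by simp
          then have "(deriv^^j) f z = 0" "(deriv^^(Suc j)) f z = 0" using m enat Suc by auto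
          then show "(deriv^^j) ?g z = 0"
            using Cinf_formula[OF assms, of j a z] by (simp only: mult_zero_right add_0)
        qed
        then have "enat k \<le> Sup ?Sg" by (rule Sup_upper)
        then have "enat k + 1 \<le> Sup ?Sg + 1" by (rule add_right_mono)
        then show ?thesis using enat Suc by (simp add: eSuc_enat[symmetric] eSuc_plus_1)
      qed
    next
      case infinity
      have "\<infinity> \<in> ?Sg"
      proof (safe)
        fix j
        have "(deriv^^j) f z = 0" "(deriv^^(Suc j)) f z = 0" using m infinity by (auto simp del: funpow.simps)
        then show "(deriv^^j) ?g z = 0"
          using Cinf_formula[OF assms, of j a z] by (simp only: mult_zero_right add_0)
      qed
      then have "\<infinity> \<le> Sup ?Sg" by (rule Sup_upper)
      then show ?thesis using infinity by (cases "Sup ?Sg") auto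
    qed
  qed
qed

lemma mult_fun_h2:
  assumes "g z = 0" shows "1 \<le> mult_fun g z"
  unfolding mult_fun_def
  apply (rule Sup_upper) using assms by (simp add: one_enat_def)

lemma mult_fun_h3:
  assumes "g z \<noteq> 0" shows "mult_fun g z = 0"
proof -
  have "{m::enat. \<forall>j::nat. enat j < m \<longrightarrow> (deriv^^j) g z = 0} = {0}"
  proof safe
    fix m :: enat assume "\<forall>j. enat j < m \<longrightarrow> (deriv ^^ j) g z = 0"
    then have "\<not> enat 0 < m" using assms by auto
    then show "m = 0" by (simp add: zero_enat_def[symmetric])
  qed auto
  then show ?thesis unfolding mult_fun_def by simp
qed


lemma mfl_set_finite: "finite {m::nat. m \<le> K \<and> (\<forall>j<m. (deriv^^j) h x = 0)}"
  by (rule finite_subset[of _ "{..K}"]) auto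

lemma mfl_set_ne: "0 \<in> {m::nat. m \<le> K \<and> (\<forall>j<m. (deriv^^j) h x = 0)}"
  by simp

lemma mult_fun_le_h1:
  fixes f :: "real \<Rightarrow> real"
  assumes N: "N \<ge> 2" and C: "Ck (N - 1) f"
  shows "mult_fun_le N f z \<le> mult_fun_le (N - 1) (\<lambda>x. a * f x + deriv f x) z + 1"
proof -
  let ?g = "\<lambda>x. a * f x + deriv f x"
  let ?Sf = "{m::nat. m \<le> N \<and> (\<forall>j<m. (deriv^^j) f z = 0)}"
  let ?Sg = "{m::nat. m \<le> N - 1 \<and> (\<forall>j<m. (deriv^^j) ?g z = 0)}"
  have d: "\<And>j x. j < N - 1 \<Longrightarrow> (deriv^^j) f differentiable (at x)"
    using C unfolding Ck_def by blast
  define M where "M = Max ?Sf"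
  have MS: "M \<in> ?Sf" unfolding M_def by (rule Max_in[OF mfl_set_finite]) (use mfl_set_ne in blast)
  have "M - 1 \<in> ?Sg"
  proof (safe)
    show "M - 1 \<le> N - 1" using MS by auto
    fix j assume j: "j < M - 1"
    then have jN: "j < N - 1" using MS by auto
    have "(deriv^^j) f z = 0" "(deriv^^(Suc j)) f z = 0" using MS j by (auto simp del: funpow.simps)
    then show "(deriv^^j) ?g z = 0"
      using hd_formula[of "N - 1" f j a, OF d jN] by (simp only: mult_zero_right add_0)
  qed
  then have "M - 1 \<le> Max ?Sg" using mfl_set_finite by (rule Max_ge[rotated])
  then have "M \<le> Max ?Sg + 1" by linarith
  then show ?thesis unfolding mult_fun_le_def M_def[symmetric]
    by (simp add: one_enat_def)
qed

lemma mult_fun_le_h2: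
  assumes "K \<ge> 1" "g z = 0" shows "1 \<le> mult_fun_le K g z"
proof -
  have "1 \<in> {m::nat. m \<le> K \<and> (\<forall>j<m. (deriv^^j) g z = 0)}" using assms by auto
  then have "1 \<le> Max {m::nat. m \<le> K \<and> (\<forall>j<m. (deriv^^j) g z = 0)}"
    using mfl_set_finite by (rule Max_ge[rotated])
  then show ?thesis unfolding mult_fun_le_def by (simp add: one_enat_def)
qed

lemma mult_fun_le_h3:
  assumes "g z \<noteq> 0" shows "mult_fun_le K g z = 0"
proof -
  have "{m::nat. m \<le> K \<and> (\<forall>j<m. (deriv^^j) g z = 0)} = {0}"
    using assms by auto
  then show ?thesis unfolding mult_fun_le_def by (simp add: zero_enat_def)
qed


theorem lemma4p8:
  shows "(\<forall>(f::real \<Rightarrow> real) (a::real).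
            Cinf f \<longrightarrow>
            (let g = (\<lambda>x. a * f x + deriv f x) in
             lower_density (zero_set g) (mult_fun g) \<ge> lower_density (zero_set f) (mult_fun f)))
       \<and> (\<forall>(N::nat) (f::real \<Rightarrow> real) (a::real).
            N \<ge> 2 \<longrightarrow> Ck (N - 1) f \<longrightarrow>
            (let g = (\<lambda>x. a * f x + deriv f x) in
             lower_density (zero_set g) (mult_fun_le (N - 1) g)
               \<ge> lower_density (zero_set f) (mult_fun_le N f)))"
proof (intro conjI allI impI)
  fix f :: "real \<Rightarrow> real" and a :: real
  assume C: "Cinf f"
  have d: "\<And>x. f differentiable (at x)" using Cinf_diff[OF C, of 0] by simp
  show "let g = (\<lambda>x. a * f x + deriv f x) in
             lower_density (zero_set g) (mult_fun g) \<ge> lower_density (zero_set f) (mult_fun f)"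
    unfolding Let_def
    apply (rule density_mono)
    apply (rule interval_bound[OF d refl])
    using mult_fun_h1[OF C] mult_fun_h2 mult_fun_h3 by auto
next
  fix N :: nat and f :: "real \<Rightarrow> real" and a :: real
  assume N: "N \<ge> 2" and C: "Ck (N - 1) f"
  have d: "\<And>x. f differentiable (at x)" using C N unfolding Ck_def
    by (metis One_nat_def Suc_1 Suc_le_lessD funpow_0 zero_less_diff)
  have K: "N - 1 \<ge> 1" using N by simp
  show "let g = (\<lambda>x. a * f x + deriv f x) in
             lower_density (zero_set g) (mult_fun_le (N - 1) g)
               \<ge> lower_density (zero_set f) (mult_fun_le N f)"
    unfolding Let_def
    apply (rule density_mono)
    apply (rule interval_bound[OF d refl])
    using mult_fun_le_h1[OF N C] mult_fun_le_h2[OF K] mult_fun_le_h3 by auto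
qed

end
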